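(* Assume $v_\circ<v_\bullet$ and fix $v<v_\bullet$. For every $k'\in\mathbb N$ there exist $k_2\ge k'$ and $\rho_0\ge1$ (large enough) such that $p_{k_2}<e^{-\log^{3/2}L_{k_2}}$.
   Context: Fix $q\in(0,1)$, $p_\circ,p_\bullet\in[0,1]$, $v_\circ=2p_\circ-1$, $v_\bullet=2p_\bullet-1$. Under $\mathbb P^\rho$: $\omega$ is a Poisson point process of intensity $\rho\sum_xP_x$ on two-sided paths $w:\mathbb Z\to\mathbb Z$, where $P_x$ is the law of a two-sided lazy simple random walk (steps $-1,0,1$ with probabilities $\frac{1-q}2,q,\frac{1-q}2$) with $w(0)=x$; independently $(U_y)_{y\in\mathbb Z^2}$ are i.i.d. uniform $[0,1]$. $\mathcal T=\{(w(n),n): w\in\omega, n\in\mathbb Z\}$. For $y\in\mathbb Z^2$, $Y^y_0=y$ and $Y^y_{i+1}=Y^y_i+(1,1)$ if ($Y^y_i\in\mathcal T$, $U_{Y^y_i}\le p_\bullet$) or ($Y^y_i\notin\mathcal T$, $U_{Y^y_i}\le p_\circ$), else $Y^y_{i+1}=Y^y_i+(-1,1)$; $X^y$ is the spatial coordinate of $Y^y$. Scales: $L_0=100$, $L_{k+1}=\lfloor L_k^{1/2}\rfloor L_k$. $I_L=([0,L]\times\{0\})\cap\mathbb Z^2$, $I_L(m)=(rL,sL)+I_L$ for $m=(r,s)$. Velocities: $\delta=\frac12(v_\bullet-v)$, $v_1=v_\bullet-\delta$, $v_{k+1}=v_k-\delta\frac{6}{\pi^2}\frac1{k^2}$. Bad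 events: $A_k(m)=\{\exists (x,n)\in I_{L_k}(m): X^{(x,n)}_{L_k}-x<v_kL_k\}$. Densities: $\rho_0>0$ given, $\rho_{k+1}=(1+L_k^{-1/16})\rho_k$. $p_k=\mathbb P^{\rho_k}(A_k(0))$. *)

theory Defs
  imports "HOL-Probability.Probability"
begin

text \<open>Index set of the independent coordinates of the underlying product probability space.
  Cnt x      : number of paths w of the Poisson process with w(0) = x (Poisson(rho));
  Stp x j i  : i-th increment w(i+1) - w(i) (i an integer) of the j-th such path
               (i.i.d. lazy steps -1,0,1 with probabilities (1-q)/2, q, (1-q)/2);
  Unf x n    : the uniform variable U_(x,n).
  A Poisson point process with intensity rho * sum_x P_x is realised as: independently for
  each x a Poisson(rho) number of i.i.d. P_x-distributed two-sided paths.\<close>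
datatype idx = Cnt int | Stp int nat int | Unf int int

definition step_pmf :: "real \<Rightarrow> int pmf" where
  "step_pmf q = pmf_of_list [(-1, (1 - q) / 2), (0, q), (1, (1 - q) / 2)]"

definition coord_measure :: "real \<Rightarrow> real \<Rightarrow> idx \<Rightarrow> real measure" where
  "coord_measure q \<rho> i = (case i of
      Cnt x \<Rightarrow> distr (measure_pmf (poisson_pmf \<rho>)) borel real
    | Stp x j n \<Rightarrow> distr (measure_pmf (step_pmf q)) borel real_of_int
    | Unf x n \<Rightarrow> uniform_measure lborel {0..1})"

definition Prho :: "real \<Rightarrow> real \<Rightarrow> (idx \<Rightarrow> real) measure" where
  "Prho q \<rho> = PiM UNIV (coord_measure q \<rho>)"

definition cnt :: "(idx \<Rightarrow> real) \<Rightarrow> int \<Rightarrow> nat" where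
  "cnt \<omega> x = nat \<lfloor>\<omega> (Cnt x)\<rfloor>"

definition stp :: "(idx \<Rightarrow> real) \<Rightarrow> int \<Rightarrow> nat \<Rightarrow> int \<Rightarrow> int" where
  "stp \<omega> x j i = \<lfloor>\<omega> (Stp x j i)\<rfloor>"

definition path :: "(idx \<Rightarrow> real) \<Rightarrow> int \<Rightarrow> nat \<Rightarrow> int \<Rightarrow> int" where
  "path \<omega> x j n = (if 0 \<le> n then x + (\<Sum>i\<in>{0..<n}. stp \<omega> x j i)
                     else x - (\<Sum>i\<in>{n..<0}. stp \<omega> x j i))"

definition trace :: "(idx \<Rightarrow> real) \<Rightarrow> (int \<times> int) set" where
  "trace \<omega> = {(path \<omega> x j n, n) | x j n. j < cnt \<omega> x}"

definition U :: "(idx \<Rightarrow> real) \<Rightarrow> int \<times> int \<Rightarrow> real" where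
  "U \<omega> y = \<omega> (Unf (fst y) (snd y))"

fun Y :: "real \<Rightarrow> real \<Rightarrow> (idx \<Rightarrow> real) \<Rightarrow> int \<times> int \<Rightarrow> nat \<Rightarrow> int \<times> int" where
  "Y pc pb \<omega> y 0 = y"
| "Y pc pb \<omega> y (Suc i) =
     (let z = Y pc pb \<omega> y i in
      if (z \<in> trace \<omega> \<and> U \<omega> z \<le> pb) \<or> (z \<notin> trace \<omega> \<and> U \<omega> z \<le> pc)
      then (fst z + 1, snd z + 1) else (fst z - 1, snd z + 1))"

definition X :: "real \<Rightarrow> real \<Rightarrow> (idx \<Rightarrow> real) \<Rightarrow> int \<times> int \<Rightarrow> nat \<Rightarrow> int" where
  "X pc pb \<omega> y i = fst (Y pc pb \<omega> y i)"

fun Lsc :: "nat \<Rightarrow> nat" where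
  "Lsc 0 = 100"
| "Lsc (Suc k) = nat \<lfloor>sqrt (real (Lsc k))\<rfloor> * Lsc k"

text \<open>Velocities v_k, k >= 1 (the value at k = 0 is irrelevant and set equal to v_1).\<close>
fun vel :: "real \<Rightarrow> real \<Rightarrow> nat \<Rightarrow> real" where
  "vel vb v 0 = vb - (vb - v) / 2"
| "vel vb v (Suc 0) = vb - (vb - v) / 2"
| "vel vb v (Suc (Suc k)) = vel vb v (Suc k) - ((vb - v) / 2) * (6 / pi^2) * (1 / (real (Suc k))^2)"

fun dens :: "real \<Rightarrow> nat \<Rightarrow> real" where
  "dens \<rho>0 0 = \<rho>0"
| "dens \<rho>0 (Suc k) = (1 + real (Lsc k) powr (-1/16)) * dens \<rho>0 k"

definition Abad :: "real \<Rightarrow> real \<Rightarrow> real \<Rightarrow> real \<Rightarrow> nat \<Rightarrow> (idx \<Rightarrow> real) set" where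
  "Abad pc pb vb v k = {\<omega>. \<exists>x::int. 0 \<le> x \<and> x \<le> int (Lsc k) \<and>
       real_of_int (X pc pb \<omega> (x, 0) (Lsc k) - x) < vel vb v k * real (Lsc k)}"

definition pk :: "real \<Rightarrow> real \<Rightarrow> real \<Rightarrow> real \<Rightarrow> real \<Rightarrow> nat \<Rightarrow> real" where
  "pk q pc pb v \<rho>0 k = measure (Prho q (dens \<rho>0 k)) (Abad pc pb (2 * pb - 1) v k)"

end

theory Submission
  imports Defs "HOL-Real_Asymp.Real_Asymp"
begin


lemma sets_coord[simp]: "sets (coord_measure q \<rho> i) = sets borel"
  by (cases i) (auto simp: coord_measure_def)

lemma space_coord[simp]: "space (coord_measure q \<rho> i) = UNIV"
  using sets_eq_imp_space_eq[OF sets_coord] by simp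

lemma prob_coord: "prob_space (coord_measure q \<rho> i)"
  by (cases i) (auto simp: coord_measure_def intro!: prob_space.prob_space_distr prob_space_measure_pmf prob_space_uniform_measure)

lemma pps: "product_prob_space (coord_measure q \<rho>)"
  unfolding product_prob_space_def product_prob_space_axioms_def product_sigma_finite_def
  using prob_coord by (auto intro: prob_space_imp_sigma_finite)

lemma space_Prho[simp]: "space (Prho q \<rho>) = UNIV"
  by (auto simp: Prho_def space_PiM coord_measure_def split: idx.splits)

lemma prob_Prho: "prob_space (Prho q \<rho>)"
proof -
  interpret product_prob_space "coord_measure q \<rho>" UNIV by (rule pps)
  show ?thesis unfolding Prho_def by (rule P.prob_space_axioms)
qed

lemma rect:
  fixes g :: "'a \<Rightarrow> idx"
  assumes F: "finite F" "inj_on g F" and B: "\<And>a. a \<in> F \<Longrightarrow> B a \<in> sets borel"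
  shows "{\<omega>. \<forall>a\<in>F. \<omega> (g a) \<in> B a} \<in> sets (Prho q \<rho>)"
    and "measure (Prho q \<rho>) {\<omega>. \<forall>a\<in>F. \<omega> (g a) \<in> B a} = (\<Prod>a\<in>F. measure (coord_measure q \<rho> (g a)) (B a))"
proof -
  interpret product_prob_space "coord_measure q \<rho>" UNIV by (rule pps)
  define A where "A j = B (the_inv_into F g j)" for j
  have AB: "a \<in> F \<Longrightarrow> A (g a) = B a" for a using F by (simp add: A_def the_inv_into_f_f)
  have eq: "{\<omega>. \<forall>a\<in>F. \<omega> (g a) \<in> B a} = {x\<in>space (Prho q \<rho>). \<forall>j\<in>g`F. x j \<in> A j}"
    using AB by auto
  have As: "j \<in> g`F \<Longrightarrow> A j \<in> sets (coord_measure q \<rho> j)" for j using AB B by auto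
  have e: "emeasure (Prho q \<rho>) {x\<in>space (Prho q \<rho>). \<forall>j\<in>g`F. x j \<in> A j} = (\<Prod>j\<in>g`F. emeasure (coord_measure q \<rho> j) (A j))"
    unfolding Prho_def using F As by (intro emeasure_PiM_Collect) auto
  show "{\<omega>. \<forall>a\<in>F. \<omega> (g a) \<in> B a} \<in> sets (Prho q \<rho>)"
    unfolding eq Prho_def using F As
    by (intro sets.sets_Collect_finite_All sets_Collect_single') (auto simp: image_iff)
  have "measure (Prho q \<rho>) {\<omega>. \<forall>a\<in>F. \<omega> (g a) \<in> B a} = enn2real (\<Prod>j\<in>g`F. emeasure (coord_measure q \<rho> j) (A j))"
    unfolding eq measure_def e ..
  also have "\<dots> = (\<Prod>j\<in>g`F. measure (coord_measure q \<rho> j) (A j))"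
    by (simp add: M.emeasure_eq_measure prod_ennreal measure_nonneg prod_nonneg)
  also have "\<dots> = (\<Prod>a\<in>F. measure (coord_measure q \<rho> (g a)) (B a))"
    using F by (simp add: prod.reindex AB)
  finally show "measure (Prho q \<rho>) {\<omega>. \<forall>a\<in>F. \<omega> (g a) \<in> B a} = (\<Prod>a\<in>F. measure (coord_measure q \<rho> (g a)) (B a))" .
qed



lemma meas_cnt: "measure (coord_measure q \<rho> (Cnt y)) {..<real M} = (\<Sum>k<M. pmf (poisson_pmf \<rho>) k)"
proof -
  have "measure (coord_measure q \<rho> (Cnt y)) {..<real M} = measure (measure_pmf (poisson_pmf \<rho>)) (real -` {..<real M})"
    by (simp add: coord_measure_def measure_distr)
  also have "real -` {..<real M} = {..<M}" by auto
  finally show ?thesis by (simp add: measure_measure_pmf_finite)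
qed

lemma step_wf: "(0::real) \<le> q \<Longrightarrow> q \<le> 1 \<Longrightarrow> pmf_of_list_wf [(-1::int, (1 - q) / 2), (0, q), (1, (1 - q) / 2)]"
  by (auto simp: pmf_of_list_wf_def)

lemma meas_stp0: assumes "0 \<le> q" "q \<le> 1"
  shows "measure (coord_measure q \<rho> (Stp y j i)) {0..<1} = q"
proof -
  have "measure (coord_measure q \<rho> (Stp y j i)) {0..<1} = measure (measure_pmf (step_pmf q)) (real_of_int -` {0..<1})"
    by (simp add: coord_measure_def measure_distr)
  also have "real_of_int -` {0..<1} = {0}" by auto
  also have "measure (measure_pmf (step_pmf q)) {0} = pmf (step_pmf q) 0"
    by (simp add: measure_pmf_single)
  also have "\<dots> = q" unfolding step_pmf_def using step_wf[OF assms] by (simp add: pmf_pmf_of_list)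
  finally show ?thesis .
qed

lemma meas_stp1: assumes "0 \<le> q" "q \<le> 1"
  shows "measure (coord_measure q \<rho> (Stp y j i)) (- {0..<1}) = 1 - q"
proof -
  interpret prob_space "coord_measure q \<rho> (Stp y j i)" by (rule prob_coord)
  have "measure (coord_measure q \<rho> (Stp y j i)) (space (coord_measure q \<rho> (Stp y j i)) - {0..<1}) = 1 - q"
    by (subst prob_compl) (auto simp: meas_stp0[OF assms])
  then show ?thesis by (simp add: Compl_eq_Diff_UNIV)
qed

lemma meas_unf0: assumes "0 \<le> p" "p \<le> 1"
  shows "measure (coord_measure q \<rho> (Unf a b)) {..p} = p"
proof -
  have "emeasure (coord_measure q \<rho> (Unf a b)) {..p} = ennreal p"
    using assms by (simp add: coord_measure_def emeasure_uniform_measure Int_commute min_def divide_ennreal_def)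
  then show ?thesis using assms by (simp add: measure_def)
qed

lemma meas_unf1: assumes "0 \<le> p" "p \<le> 1"
  shows "measure (coord_measure q \<rho> (Unf a b)) {p<..} = 1 - p"
proof -
  interpret prob_space "coord_measure q \<rho> (Unf a b)" by (rule prob_coord)
  have "measure (coord_measure q \<rho> (Unf a b)) (space (coord_measure q \<rho> (Unf a b)) - {..p}) = 1 - p"
    by (subst prob_compl) (auto simp: meas_unf0[OF assms])
  moreover have "space (coord_measure q \<rho> (Unf a b)) - {..p} = {p<..}" by auto
  ultimately show ?thesis by simp
qed



lemma exists_t:
  fixes a p :: real
  assumes "a < p"
  shows "\<exists>t>1. t powr a * (p / t + (1 - p)) < 1"
proof -
  define f where "f t = t powr a * (p / t + (1 - p))" for t :: real
  have "(f has_real_derivative (a * 1 powr (a - 1) * (p / 1 + (1 - p)) + 1 powr a * (- p / 1\<^sup>2))) (at 1)"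
    unfolding f_def
    by (auto intro!: derivative_eq_intros simp: power2_eq_square)
  then have d: "(f has_real_derivative (a - p)) (at 1)" by simp
  obtain d where d0: "d > 0" and dd: "\<And>h. h > 0 \<Longrightarrow> h < d \<Longrightarrow> f (1 + h) < f 1"
    using DERIV_neg_dec_right[OF d] assms by auto
  have "f (1 + d/2) < f 1" using dd[of "d/2"] d0 by simp
  moreover have "f 1 = 1" by (simp add: f_def)
  ultimately show ?thesis using d0 by (intro exI[of _ "1 + d/2"]) (auto simp: f_def)
qed

lemma prod_if_pow: "finite A \<Longrightarrow> (\<Prod>i\<in>A. if P i then (t::real) else 1) = t ^ card {i\<in>A. P i}"
  by (simp add: prod.If_cases Int_def conj_commute)

lemma chernoff:
  fixes p a t :: real and L :: nat
  assumes t: "t > 1" and p: "0 \<le> p" "p \<le> 1"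
  shows "(\<Sum>s\<in>{s\<in>Pi\<^sub>E {..<L} (\<lambda>_. UNIV). real (card {i\<in>{..<L}. s i}) < a * L}.
            \<Prod>i<L. if s i then p else 1 - p) \<le> (t powr a * (p / t + (1 - p))) ^ L"
proof -
  let ?w = "\<lambda>s. \<Prod>i<L. if s i then p else 1 - p"
  let ?P = "Pi\<^sub>E {..<L} (\<lambda>_. UNIV::bool set)"
  have fin: "finite ?P" by (intro finite_PiE) auto
  have w0: "0 \<le> ?w s" for s using p by (intro prod_nonneg) auto
  have key: "?w s \<le> t powr (a * L) * (\<Prod>i<L. if s i then p / t else 1 - p)"
    if "real (card {i\<in>{..<L}. s i}) < a * L" for s
  proof -
    let ?c = "card {i\<in>{..<L}. s i}"
    have "1 \<le> t powr (a * L - ?c)" using t that by (intro ge_one_powr_ge_zero) auto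
    then have "?w s \<le> ?w s * t powr (a * L - ?c)" using w0[of s] by (simp add: mult_le_cancel_left1)
    also have "t powr (a * L - ?c) = t powr (a * L) / t ^ ?c"
      using t by (simp add: powr_diff powr_realpow)
    also have "t ^ ?c = (\<Prod>i<L. if s i then t else 1)" by (simp add: prod_if_pow)
    also have "?w s * (t powr (a * L) / (\<Prod>i<L. if s i then t else 1)) =
               t powr (a * L) * (\<Prod>i<L. (if s i then p else 1 - p) / (if s i then t else 1))"
      by (simp add: prod_dividef)
    also have "(\<Prod>i<L. (if s i then p else 1 - p) / (if s i then t else 1)) = (\<Prod>i<L. if s i then p / t else 1 - p)"
      by (intro prod.cong) auto
    finally show ?thesis .
  qed
  have "(\<Sum>s\<in>{s\<in>?P. real (card {i\<in>{..<L}. s i}) < a * L}. ?w s)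
      \<le> (\<Sum>s\<in>{s\<in>?P. real (card {i\<in>{..<L}. s i}) < a * L}. t powr (a * L) * (\<Prod>i<L. if s i then p / t else 1 - p))"
    using key by (intro sum_mono) auto
  also have "\<dots> \<le> (\<Sum>s\<in>?P. t powr (a * L) * (\<Prod>i<L. if s i then p / t else 1 - p))"
  proof (rule sum_mono2[OF fin])
    show "\<And>s. s \<in> ?P - {s\<in>?P. real (card {i\<in>{..<L}. s i}) < a * L} \<Longrightarrow> 0 \<le> t powr (a * L) * (\<Prod>i<L. if s i then p / t else 1 - p)"
      using t p by (intro mult_nonneg_nonneg prod_nonneg) auto
  qed blast
  also have "\<dots> = t powr (a * L) * (\<Sum>s\<in>?P. \<Prod>i<L. if s i then p / t else 1 - p)"
    by (simp add: sum_distrib_left)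
  also have "(\<Sum>s\<in>?P. \<Prod>i<L. if s i then p / t else 1 - p) = (\<Prod>i<L. \<Sum>b\<in>UNIV. if b then p / t else 1 - p)"
    by (subst prod_sum_PiE) auto
  also have "\<dots> = (p / t + (1 - p)) ^ L" by (simp add: UNIV_bool add.commute)
  also have "t powr (a * L) = (t powr a) ^ L" using t by (simp add: powr_power mult.commute)
  finally show ?thesis by (simp add: power_mult_distrib)
qed



definition sg :: "bool \<Rightarrow> int" where "sg b = (if b then 1 else -1)"
definition pos :: "int \<Rightarrow> (nat \<Rightarrow> bool) \<Rightarrow> nat \<Rightarrow> int" where "pos x s i = x + (\<Sum>l<i. sg (s l))"
definition Qset :: "real \<Rightarrow> int \<Rightarrow> nat \<Rightarrow> (nat \<Rightarrow> bool) \<Rightarrow> (idx \<Rightarrow> real) set" where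
  "Qset p x L s = {\<omega>. \<forall>i\<in>{..<L}. \<omega> (Unf (pos x s i) (int i)) \<in> (if s i then {..p} else {p<..})}"
definition Rset :: "int \<Rightarrow> nat \<Rightarrow> (nat \<Rightarrow> nat) \<Rightarrow> (idx \<Rightarrow> real) set" where
  "Rset y M f = {\<omega>. \<forall>a\<in>(SIGMA j:{..<M}. {..<Suc (f j)}). \<omega> (case a of (j,i) \<Rightarrow> Stp y j (int i)) \<in>
       (case a of (j,i) \<Rightarrow> if i < f j then {0..<1} else -{0..<1})}"
definition Cset :: "int \<Rightarrow> nat \<Rightarrow> (idx \<Rightarrow> real) set" where
  "Cset y M = {\<omega>. \<forall>a\<in>{()}. \<omega> (Cnt y) \<in> {..<real M}}"

lemma Q_meas:
  assumes "0 \<le> p" "p \<le> 1"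
  shows "Qset p x L s \<in> sets (Prho q \<rho>)"
    and "measure (Prho q \<rho>) (Qset p x L s) = (\<Prod>i<L. if s i then p else 1 - p)"
proof -
  have inj: "inj_on (\<lambda>i. Unf (pos x s i) (int i)) {..<L}" by (auto simp: inj_on_def)
  have B: "\<And>i. (if s i then {..p} else {p<..}) \<in> sets borel" by auto
  show "Qset p x L s \<in> sets (Prho q \<rho>)" unfolding Qset_def using rect(1)[OF _ inj B] by simp
  have "measure (Prho q \<rho>) (Qset p x L s) = (\<Prod>i<L. measure (coord_measure q \<rho> (Unf (pos x s i) (int i))) (if s i then {..p} else {p<..}))"
    unfolding Qset_def using rect(2)[OF _ inj B] by simp
  also have "\<dots> = (\<Prod>i<L. if s i then p else 1 - p)"
    using assms by (intro prod.cong) (auto simp: meas_unf0 meas_unf1)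
  finally show "measure (Prho q \<rho>) (Qset p x L s) = (\<Prod>i<L. if s i then p else 1 - p)" .
qed

lemma R_meas:
  assumes "0 \<le> q" "q \<le> 1"
  shows "Rset y M f \<in> sets (Prho q \<rho>)"
    and "measure (Prho q \<rho>) (Rset y M f) = (\<Prod>j<M. q ^ f j * (1 - q))"
proof -
  let ?S = "SIGMA j:{..<M}. {..<Suc (f j)}"
  have fin: "finite ?S" by auto
  have inj: "inj_on (\<lambda>a. case a of (j,i) \<Rightarrow> Stp y j (int i)) ?S" by (auto simp: inj_on_def)
  have B: "\<And>a. (case a of (j,i) \<Rightarrow> if i < f j then {0..<1} else -{0..<1::real}) \<in> sets borel" by (auto split: prod.splits)
  show "Rset y M f \<in> sets (Prho q \<rho>)" unfolding Rset_def using rect(1)[OF fin inj B] .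
  have "measure (Prho q \<rho>) (Rset y M f) = (\<Prod>a\<in>?S. measure (coord_measure q \<rho> (case a of (j,i) \<Rightarrow> Stp y j (int i)))
           (case a of (j,i) \<Rightarrow> if i < f j then {0..<1} else -{0..<1}))"
    unfolding Rset_def using rect(2)[OF fin inj B] .
  also have "\<dots> = (\<Prod>a\<in>?S. case a of (j,i) \<Rightarrow> if i < f j then q else 1 - q)"
    using assms by (intro prod.cong) (auto simp: meas_stp0 meas_stp1)
  also have "\<dots> = (\<Prod>j<M. \<Prod>i<Suc (f j). if i < f j then q else 1 - q)"
    by (subst prod.Sigma) auto
  also have "\<dots> = (\<Prod>j<M. q ^ f j * (1 - q))"
    by (intro prod.cong) auto
  finally show "measure (Prho q \<rho>) (Rset y M f) = (\<Prod>j<M. q ^ f j * (1 - q))" .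
qed

lemma C_meas:
  shows "Cset y M \<in> sets (Prho q \<rho>)"
    and "measure (Prho q \<rho>) (Cset y M) = (\<Sum>k<M. pmf (poisson_pmf \<rho>) k)"
proof -
  have inj: "inj_on (\<lambda>a::unit. Cnt y) {()}" by auto
  have B: "\<And>a::unit. {..<real M} \<in> sets borel" by auto
  show "Cset y M \<in> sets (Prho q \<rho>)" unfolding Cset_def using rect(1)[OF _ inj B] by simp
  show "measure (Prho q \<rho>) (Cset y M) = (\<Sum>k<M. pmf (poisson_pmf \<rho>) k)"
    unfolding Cset_def using rect(2)[OF _ inj B] by (simp add: meas_cnt)
qed

lemma sum_R: "(\<Sum>f\<in>Pi\<^sub>E {..<M} (\<lambda>_. {..<m}). \<Prod>j<M. (q::real) ^ f j * (1 - q)) = (1 - q ^ m) ^ M"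
proof -
  have "(\<Sum>f\<in>Pi\<^sub>E {..<M} (\<lambda>_. {..<m}). \<Prod>j<M. q ^ f j * (1 - q)) = (\<Prod>j<M. \<Sum>i<m. q ^ i * (1 - q))"
    by (subst prod_sum_PiE) auto
  also have "(\<Sum>i<m. q ^ i * (1 - q)) = 1 - q ^ m"
    by (simp add: one_diff_power_eq sum_distrib_left mult.commute)
  finally show ?thesis by simp
qed



lemma stp_zero_iff: "stp \<omega> y j i = 0 \<longleftrightarrow> \<omega> (Stp y j i) \<in> {0..<1}"
  by (auto simp: stp_def floor_eq_iff)

lemma cover:
  assumes nt: "(y, n) \<notin> trace \<omega>" and n: "0 \<le> n"
  shows "\<omega> \<in> Cset y M \<or> (\<exists>f\<in>Pi\<^sub>E {..<M} (\<lambda>_. {..<nat n}). \<omega> \<in> Rset y M f)"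
proof (cases "\<omega> \<in> Cset y M")
  case False
  then have "real M \<le> \<omega> (Cnt y)" by (auto simp: Cset_def)
  then have "int M \<le> \<lfloor>\<omega> (Cnt y)\<rfloor>" by (simp add: le_floor_iff)
  then have cM: "M \<le> cnt \<omega> y" unfolding cnt_def by linarith
  have ex: "\<exists>i. i < nat n \<and> stp \<omega> y j (int i) \<noteq> 0" if j: "j < M" for j
  proof (rule ccontr)
    assume neg: "\<not> (\<exists>i. i < nat n \<and> stp \<omega> y j (int i) \<noteq> 0)"
    have z: "stp \<omega> y j i = 0" if i: "i \<in> {0..<n}" for i
    proof -
      have a: "nat i < nat n" "int (nat i) = i" using i by auto
      from neg have "\<not> (nat i < nat n \<and> stp \<omega> y j (int (nat i)) \<noteq> 0)" by blast
      with a show ?thesis by simp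
    qed
    have "path \<omega> y j n = y" using n z by (simp add: path_def)
    moreover have jc: "j < cnt \<omega> y" using j cM by simp
    have "(path \<omega> y j n, n) \<in> trace \<omega>" unfolding trace_def mem_Collect_eq using jc by blast
    ultimately have "(y, n) \<in> trace \<omega>" by simp
    with nt show False by simp
  qed
  define f where "f = (\<lambda>j\<in>{..<M}. LEAST i. stp \<omega> y j (int i) \<noteq> 0)"
  have f1: "f j < nat n" and f2: "stp \<omega> y j (int (f j)) \<noteq> 0"
    and f3: "\<And>i. i < f j \<Longrightarrow> stp \<omega> y j (int i) = 0" if jM: "j < M" for j
  proof -
    obtain i where i: "i < nat n" "stp \<omega> y j (int i) \<noteq> 0" using ex[OF jM] by blast
    have fj: "f j = (LEAST i. stp \<omega> y j (int i) \<noteq> 0)" using jM by (simp add: f_def)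
    show "f j < nat n" unfolding fj using Least_le[of "\<lambda>i. stp \<omega> y j (int i) \<noteq> 0" i] i by simp
    show "stp \<omega> y j (int (f j)) \<noteq> 0" unfolding fj using LeastI[of "\<lambda>i. stp \<omega> y j (int i) \<noteq> 0" i] i(2) by simp
    show "\<And>i. i < f j \<Longrightarrow> stp \<omega> y j (int i) = 0" unfolding fj using not_less_Least by blast
  qed
  have "f \<in> Pi\<^sub>E {..<M} (\<lambda>_. {..<nat n})" using f1 by (auto simp: f_def)
  moreover have "\<omega> (Stp y j (int i)) \<in> (if i < f j then {0..<1} else -{0..<1})" if "j < M" "i < Suc (f j)" for j i
  proof (cases "i < f j")
    case True then show ?thesis using f3[OF that(1) True] by (simp add: stp_zero_iff)
  next
    case False then have "i = f j" using that(2) by simp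
    then show ?thesis using f2[OF that(1)] False by (simp add: stp_zero_iff)
  qed
  then have "\<omega> \<in> Rset y M f" unfolding Rset_def by auto
  ultimately show ?thesis by blast
qed simp

lemma sum_sg: "(\<Sum>l<L. sg (s l)) = 2 * int (card {l\<in>{..<L}. s l}) - int L"
proof -
  have "(\<Sum>l<L. sg (s l)) = (\<Sum>l<L. 2 * (if s l then 1 else 0) - 1)" by (intro sum.cong) (auto simp: sg_def)
  also have "\<dots> = 2 * (\<Sum>l<L. if s l then 1 else 0) - int L" by (simp add: sum_subtractf sum_distrib_left)
  also have "(\<Sum>l<L. if s l then 1 else 0) = (\<Sum>l\<in>{l\<in>{..<L}. s l}. 1::int)" by (subst sum.inter_filter) auto
  finally show ?thesis by simp
qed

lemma abs_pos: "\<bar>pos x s i - x\<bar> \<le> int i"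
proof -
  have "\<bar>pos x s i - x\<bar> = \<bar>\<Sum>l<i. sg (s l)\<bar>" by (simp add: pos_def)
  also have "\<dots> \<le> (\<Sum>l<i. \<bar>sg (s l)\<bar>)" by (rule sum_abs)
  also have "\<dots> = (\<Sum>l<i. 1)" by (intro sum.cong) (auto simp: sg_def)
  also have "\<dots> = int i" by simp
  finally show ?thesis .
qed

lemma walk:
  fixes x :: int and L :: nat and pc pb :: real and \<omega> :: "idx \<Rightarrow> real"
  assumes x: "0 \<le> x" "x \<le> int L"
    and cov: "\<And>y m. - int L \<le> y \<Longrightarrow> y \<le> 2 * int L \<Longrightarrow> 0 \<le> m \<Longrightarrow> m < int L \<Longrightarrow> (y, m) \<in> trace \<omega>"
  defines "s \<equiv> restrict (\<lambda>l. U \<omega> (Y pc pb \<omega> (x,0) l) \<le> pb) {..<L}"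
  shows "s \<in> Pi\<^sub>E {..<L} (\<lambda>_. UNIV)" "\<omega> \<in> Qset pb x L s"
    "X pc pb \<omega> (x,0) L - x = 2 * int (card {l\<in>{..<L}. s l}) - int L"
proof -
  show "s \<in> Pi\<^sub>E {..<L} (\<lambda>_. UNIV)" by (simp add: s_def)
  have Yi: "Y pc pb \<omega> (x,0) i = (pos x s i, int i)" if "i \<le> L" for i
    using that
  proof (induction i)
    case 0 then show ?case by (simp add: pos_def)
  next
    case (Suc i)
    then have IH: "Y pc pb \<omega> (x,0) i = (pos x s i, int i)" and iL: "i < L" by auto
    have "\<bar>pos x s i - x\<bar> \<le> int i" by (rule abs_pos)
    then have tr: "(pos x s i, int i) \<in> trace \<omega>" using iL x by (intro cov) auto
    have si: "s i = (U \<omega> (pos x s i, int i) \<le> pb)" using iL IH by (simp add: s_def)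
    have ps: "pos x s (Suc i) = pos x s i + sg (s i)" by (simp add: pos_def)
    have c: "(((pos x s i, int i) \<in> trace \<omega> \<and> U \<omega> (pos x s i, int i) \<le> pb) \<or>
              ((pos x s i, int i) \<notin> trace \<omega> \<and> U \<omega> (pos x s i, int i) \<le> pc)) = s i"
      using tr si by blast
    have "Y pc pb \<omega> (x,0) (Suc i) = (let z = (pos x s i, int i) in
      if (z \<in> trace \<omega> \<and> U \<omega> z \<le> pb) \<or> (z \<notin> trace \<omega> \<and> U \<omega> z \<le> pc)
      then (fst z + 1, snd z + 1) else (fst z - 1, snd z + 1))"
      by (simp only: Y.simps IH)
    also have "\<dots> = (if s i then (pos x s i + 1, int i + 1) else (pos x s i - 1, int i + 1))"
      unfolding Let_def c fst_conv snd_conv ..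
    also have "\<dots> = (pos x s (Suc i), int (Suc i))" unfolding ps sg_def by simp
    finally show ?case .
  qed
  show "\<omega> \<in> Qset pb x L s"
    unfolding Qset_def using Yi by (auto simp: s_def U_def)
  have "X pc pb \<omega> (x,0) L - x = pos x s L - x" using Yi[of L] by (simp add: X_def)
  also have "\<dots> = 2 * int (card {l\<in>{..<L}. s l}) - int L" by (simp add: pos_def sum_sg)
  finally show "X pc pb \<omega> (x,0) L - x = 2 * int (card {l\<in>{..<L}. s l}) - int L" .
qed



lemma asymp1:
  fixes c :: real assumes "c > 0"
  shows "((\<lambda>x::real. 2 * (x + 1) * exp (- c * x) * exp (ln x powr (3/2))) \<longlongrightarrow> 0) at_top"
  using assms by real_asymp

lemma Lsc_ge: "Lsc k \<ge> 100 + k"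
proof (induction k)
  case 0 then show ?case by simp
next
  case (Suc k)
  have "sqrt 100 \<le> sqrt (real (Lsc k))" using Suc by (subst real_sqrt_le_iff) simp
  then have "10 \<le> sqrt (real (Lsc k))" by simp
  then have "10 \<le> nat \<lfloor>sqrt (real (Lsc k))\<rfloor>" by linarith
  then have "10 * Lsc k \<le> nat \<lfloor>sqrt (real (Lsc k))\<rfloor> * Lsc k" by (intro mult_right_mono) auto
  moreover have "Lsc (Suc k) = nat \<lfloor>sqrt (real (Lsc k))\<rfloor> * Lsc k" by simp
  ultimately show ?case using Suc by linarith
qed

lemma dens_ge: "0 \<le> \<rho>0 \<Longrightarrow> \<rho>0 \<le> dens \<rho>0 k"
proof (induction k)
  case 0 then show ?case by simp
next
  case (Suc k)
  have d0: "0 \<le> dens \<rho>0 k" using Suc by linarith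
  have "0 \<le> real (Lsc k) powr (-1/16) * dens \<rho>0 k" using d0 by simp
  then have "dens \<rho>0 k \<le> (1 + real (Lsc k) powr (-1/16)) * dens \<rho>0 k" by (simp add: algebra_simps)
  then show ?case using Suc by simp
qed

lemma vel_le: "0 < vb - v \<Longrightarrow> vel vb v k \<le> vb - (vb - v) / 2"
proof (induction vb v k rule: vel.induct)
  case (3 vb v k)
  have "0 \<le> ((vb - v) / 2) * (6 / pi^2) * (1 / (real (Suc k))^2)" using 3 by simp
  moreover have "vel vb v (Suc (Suc k)) = vel vb v (Suc k) - ((vb - v) / 2) * (6 / pi^2) * (1 / (real (Suc k))^2)"
    by (rule vel.simps(3))
  ultimately show ?case using 3 by linarith
qed auto



lemma main_bound:
  fixes q pc pb v \<rho> a t :: real and L k M :: nat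
  assumes q: "0 \<le> q" "q \<le> 1" and pb: "0 \<le> pb" "pb \<le> 1"
    and Ld: "L = Lsc k"
    and a: "a = pb - (2*pb - 1 - v)/4"
    and vv: "v < 2*pb - 1"
    and t: "t > 1"
  defines "S \<equiv> {- int L..2 * int L} \<times> {0..<int L}"
  shows "measure (Prho q \<rho>) (Abad pc pb (2*pb-1) v k) \<le>
    (real L + 1) * (t powr a * (pb/t + (1-pb)))^L + real (card S) * ((\<Sum>k<M. pmf (poisson_pmf \<rho>) k) + (1 - q^L)^M)"
proof -
  interpret prob_space "Prho q \<rho>" by (rule prob_Prho)
  define Bad where "Bad = {s\<in>Pi\<^sub>E {..<L} (\<lambda>_. UNIV). real (card {i\<in>{..<L}. s i}) < a * L}"
  define BadQ where "BadQ = (\<Union>x\<in>{0..int L}. \<Union>s\<in>Bad. Qset pb x L s)"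
  define Cov where "Cov = (\<Union>z\<in>S. Cset (fst z) M \<union> (\<Union>f\<in>Pi\<^sub>E {..<M} (\<lambda>_. {..<nat (snd z)}). Rset (fst z) M f))"
  have finP: "finite (Pi\<^sub>E {..<L} (\<lambda>_. UNIV::bool set))" by (intro finite_PiE) auto
  have finBad: "finite Bad" unfolding Bad_def using finP by simp
  have finS: "finite S" unfolding S_def by simp
  have finF: "finite (Pi\<^sub>E {..<M} (\<lambda>_. {..<m}))" for m :: nat by (intro finite_PiE) auto
  have QS: "Qset pb x L s \<in> events" for x s using Q_meas(1)[OF pb] .
  have RS: "Rset y M f \<in> events" for y f using R_meas(1)[OF q] .
  have CS: "Cset y M \<in> events" for y using C_meas(1) .
  have BQS: "(\<Union>s\<in>Bad. Qset pb x L s) \<in> events" for x using finBad QS by (intro sets.finite_UN) auto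
  have BadQS: "BadQ \<in> events" unfolding BadQ_def by (rule sets.finite_UN) (auto intro: BQS)
  have RUS: "(\<Union>f\<in>Pi\<^sub>E {..<M} (\<lambda>_. {..<m}). Rset y M f) \<in> events" for y m using finF RS by (intro sets.finite_UN) auto
  have CRS: "Cset y M \<union> (\<Union>f\<in>Pi\<^sub>E {..<M} (\<lambda>_. {..<m}). Rset y M f) \<in> events" for y m using CS RUS by (intro sets.Un) auto
  have CovS: "Cov \<in> events" unfolding Cov_def using finS CRS by (intro sets.finite_UN) auto
  have vel: "vel (2*pb-1) v k \<le> (2*pb-1) - ((2*pb-1) - v) / 2" using vel_le[of "2*pb-1" v k] vv by simp
  have sub: "Abad pc pb (2*pb-1) v k \<subseteq> BadQ \<union> Cov"
  proof
    fix \<omega> assume "\<omega> \<in> Abad pc pb (2*pb-1) v k"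
    then obtain x where x: "0 \<le> x" "x \<le> int L"
      and bad: "real_of_int (X pc pb \<omega> (x, 0) L - x) < vel (2*pb-1) v k * real L"
      unfolding Abad_def Ld by blast
    show "\<omega> \<in> BadQ \<union> Cov"
    proof (cases "\<exists>z\<in>S. z \<notin> trace \<omega>")
      case True
      then obtain y m where z: "(y, m) \<in> S" "(y, m) \<notin> trace \<omega>" by auto
      then have m: "0 \<le> m" by (simp add: S_def)
      from cover[OF z(2) m, of M] have cw: "\<omega> \<in> Cset y M \<union> (\<Union>f\<in>Pi\<^sub>E {..<M} (\<lambda>_. {..<nat m}). Rset y M f)" by blast
      have "\<omega> \<in> Cov" unfolding Cov_def using cw by (intro UN_I[OF z(1)]) simp
      then show ?thesis by blast
    next
      case False
      then have cov: "\<And>y m. - int L \<le> y \<Longrightarrow> y \<le> 2 * int L \<Longrightarrow> 0 \<le> m \<Longrightarrow> m < int L \<Longrightarrow> (y, m) \<in> trace \<omega>"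
        unfolding S_def by auto
      define s where "s = restrict (\<lambda>l. U \<omega> (Y pc pb \<omega> (x,0) l) \<le> pb) {..<L}"
      have w1: "s \<in> Pi\<^sub>E {..<L} (\<lambda>_. UNIV)" unfolding s_def by (rule walk(1)[OF x cov])
      have w2: "\<omega> \<in> Qset pb x L s" unfolding s_def by (rule walk(2)[OF x cov])
      have w3: "X pc pb \<omega> (x,0) L - x = 2 * int (card {l\<in>{..<L}. s l}) - int L"
        unfolding s_def by (rule walk(3)[OF x cov])
      have "vel (2*pb-1) v k * real L \<le> ((2*pb-1) - ((2*pb-1) - v) / 2) * real L"
        using vel by (intro mult_right_mono) auto
      with bad w3 have "2 * real (card {l\<in>{..<L}. s l}) - real L < ((2*pb-1) - ((2*pb-1) - v) / 2) * real L"
        by simp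
      then have "real (card {l\<in>{..<L}. s l}) < a * real L" unfolding a by (simp add: algebra_simps)
      then have sB: "s \<in> Bad" using w1 by (simp add: Bad_def)
      have xin: "x \<in> {0..int L}" using x by simp
      have "\<omega> \<in> (\<Union>s\<in>Bad. Qset pb x L s)" using sB w2 by blast
      then have "\<omega> \<in> BadQ" unfolding BadQ_def using xin by blast
      then show ?thesis by blast
    qed
  qed
  have "measure (Prho q \<rho>) (Abad pc pb (2*pb-1) v k) \<le> measure (Prho q \<rho>) (BadQ \<union> Cov)"
    using sub BadQS CovS by (intro finite_measure_mono) auto
  also have "\<dots> \<le> measure (Prho q \<rho>) BadQ + measure (Prho q \<rho>) Cov"
    using BadQS CovS by (rule measure_Un_le)
  also have "measure (Prho q \<rho>) BadQ \<le> (real L + 1) * (t powr a * (pb/t + (1-pb)))^L"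
  proof -
    have "measure (Prho q \<rho>) BadQ \<le> (\<Sum>x\<in>{0..int L}. measure (Prho q \<rho>) (\<Union>s\<in>Bad. Qset pb x L s))"
      unfolding BadQ_def using BQS by (intro finite_measure_subadditive_finite) auto
    also have "\<dots> \<le> (\<Sum>x\<in>{0..int L}. (t powr a * (pb/t + (1-pb)))^L)"
    proof (rule sum_mono)
      fix x assume "x \<in> {0..int L}"
      have "measure (Prho q \<rho>) (\<Union>s\<in>Bad. Qset pb x L s) \<le> (\<Sum>s\<in>Bad. measure (Prho q \<rho>) (Qset pb x L s))"
        using finBad QS by (intro finite_measure_subadditive_finite) auto
      also have "\<dots> = (\<Sum>s\<in>Bad. \<Prod>i<L. if s i then pb else 1 - pb)"
        using Q_meas(2)[OF pb] by simp
      also have "\<dots> \<le> (t powr a * (pb/t + (1-pb)))^L"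
        unfolding Bad_def by (rule chernoff[OF t pb])
      finally show "measure (Prho q \<rho>) (\<Union>s\<in>Bad. Qset pb x L s) \<le> (t powr a * (pb/t + (1-pb)))^L" .
    qed
    also have "\<dots> = (real L + 1) * (t powr a * (pb/t + (1-pb)))^L" by simp
    finally show ?thesis .
  qed
  also have "measure (Prho q \<rho>) Cov \<le> real (card S) * ((\<Sum>k<M. pmf (poisson_pmf \<rho>) k) + (1 - q^L)^M)"
  proof -
    have "measure (Prho q \<rho>) Cov \<le> (\<Sum>z\<in>S. measure (Prho q \<rho>) (Cset (fst z) M \<union> (\<Union>f\<in>Pi\<^sub>E {..<M} (\<lambda>_. {..<nat (snd z)}). Rset (fst z) M f)))"
      unfolding Cov_def using finS CRS by (intro finite_measure_subadditive_finite) auto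
    also have "\<dots> \<le> (\<Sum>z\<in>S. (\<Sum>k<M. pmf (poisson_pmf \<rho>) k) + (1 - q^L)^M)"
    proof (rule sum_mono)
      fix z assume zS: "z \<in> S"
      obtain y m where z: "z = (y, m)" by force
      have mL: "nat m \<le> L" using zS z by (auto simp: S_def)
      have "measure (Prho q \<rho>) (Cset y M \<union> (\<Union>f\<in>Pi\<^sub>E {..<M} (\<lambda>_. {..<nat m}). Rset y M f))
          \<le> measure (Prho q \<rho>) (Cset y M) + measure (Prho q \<rho>) (\<Union>f\<in>Pi\<^sub>E {..<M} (\<lambda>_. {..<nat m}). Rset y M f)"
        using CS RUS by (rule measure_Un_le)
      also have "measure (Prho q \<rho>) (\<Union>f\<in>Pi\<^sub>E {..<M} (\<lambda>_. {..<nat m}). Rset y M f)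
           \<le> (\<Sum>f\<in>Pi\<^sub>E {..<M} (\<lambda>_. {..<nat m}). measure (Prho q \<rho>) (Rset y M f))"
        using finF RS by (intro finite_measure_subadditive_finite) auto
      also have "\<dots> = (\<Sum>f\<in>Pi\<^sub>E {..<M} (\<lambda>_. {..<nat m}). \<Prod>j<M. q ^ f j * (1 - q))"
        using R_meas(2)[OF q] by simp
      also have "\<dots> = (1 - q ^ nat m) ^ M" by (rule sum_R)
      also have "\<dots> \<le> (1 - q ^ L) ^ M"
      proof (rule power_mono)
        have "q ^ L \<le> q ^ nat m" using q mL by (intro power_decreasing) auto
        then show "1 - q ^ L \<ge> 1 - q ^ nat m" by simp
        show "0 \<le> 1 - q ^ nat m" using q by (simp add: power_le_one)
      qed
      finally show "measure (Prho q \<rho>) (Cset (fst z) M \<union> (\<Union>f\<in>Pi\<^sub>E {..<M} (\<lambda>_. {..<nat (snd z)}). Rset (fst z) M f))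
          \<le> (\<Sum>k<M. pmf (poisson_pmf \<rho>) k) + (1 - q^L)^M"
        using z C_meas(2) by simp
    qed
    also have "\<dots> = real (card S) * ((\<Sum>k<M. pmf (poisson_pmf \<rho>) k) + (1 - q^L)^M)" by simp
    finally show ?thesis .
  qed
  finally show ?thesis by simp
qed



theorem lemma3p4:
  fixes q pc pb vc vb v :: real
  assumes "0 < q" "q < 1"
    and "0 \<le> pc" "pc \<le> 1" "0 \<le> pb" "pb \<le> 1"
    and "vc = 2 * pc - 1" "vb = 2 * pb - 1"
    and "vc < vb" "v < vb"
  shows "\<forall>k'::nat. k' \<ge> 1 \<longrightarrow> (\<exists>k2 \<ge> k'. \<exists>\<rho>0 \<ge> 1.
           pk q pc pb v \<rho>0 k2 < exp (- (ln (real (Lsc k2)) powr (3/2))))"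
proof (intro allI impI)
  fix k' :: nat assume "k' \<ge> 1"
  have q: "0 \<le> q" "q \<le> 1" using assms by auto
  have pb: "0 \<le> pb" "pb \<le> 1" using assms by auto
  have pbpos: "0 < pb" using assms by linarith
  have vv: "v < 2*pb - 1" using assms by simp
  define a where "a = pb - (2*pb - 1 - v)/4"
  have "a < pb" using vv by (simp add: a_def)
  then obtain t where t: "t > 1" and th1: "t powr a * (pb / t + (1 - pb)) < 1"
    using exists_t by blast
  define \<theta> where "\<theta> = t powr a * (pb / t + (1 - pb))"
  have th0: "0 < \<theta>" unfolding \<theta>_def using t pbpos pb by (intro mult_pos_pos add_pos_nonneg) auto
  define c where "c = - ln \<theta>"
  have c0: "c > 0" using th0 th1 by (simp add: c_def \<theta>_def)
  have "\<forall>\<^sub>F x in at_top. 2 * (x + 1) * exp (- c * x) * exp (ln x powr (3/2)) < (1::real)"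
    using order_tendstoD(2)[OF asymp1[OF c0]] by simp
  then obtain N0 where N0: "\<And>x. x \<ge> N0 \<Longrightarrow> 2 * (x + 1) * exp (- c * x) * exp (ln x powr (3/2)) < (1::real)"
    by (auto simp: eventually_at_top_linorder)
  define k2 where "k2 = max k' (nat \<lceil>N0\<rceil>)"
  define L where "L = Lsc k2"
  define E where "E = exp (- (ln (real L) powr (3/2)))"
  have E0: "E > 0" by (simp add: E_def)
  have "real L \<ge> N0"
  proof -
    have "L \<ge> k2" using Lsc_ge[of k2] by (simp add: L_def)
    moreover have "k2 \<ge> nat \<lceil>N0\<rceil>" by (simp add: k2_def)
    ultimately have "real L \<ge> real (nat \<lceil>N0\<rceil>)" by simp
    moreover have "real (nat \<lceil>N0\<rceil>) \<ge> N0" by linarith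
    ultimately show ?thesis by linarith
  qed
  from N0[OF this] have "2 * (real L + 1) * exp (- c * real L) * exp (ln (real L) powr (3/2)) < 1" .
  moreover have "exp (- c * real L) = \<theta> ^ L"
  proof -
    have "exp (- c * real L) = exp (real L * ln \<theta>)" by (simp add: c_def)
    also have "\<dots> = exp (ln \<theta>) ^ L" by (rule exp_of_nat_mult)
    also have "\<dots> = \<theta> ^ L" using th0 by simp
    finally show ?thesis .
  qed
  ultimately have "2 * (real L + 1) * \<theta> ^ L * exp (ln (real L) powr (3/2)) < 1" by simp
  then have part1: "(real L + 1) * \<theta> ^ L < E / 2"
    by (simp add: E_def exp_minus field_simps)
  define S where "S = {- int L..2 * int L} \<times> {0..<int L}"
  define K where "K = real (card S)"
  have K0: "K \<ge> 0" by (simp add: K_def)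
  define \<epsilon> where "\<epsilon> = E / (4 * (K + 1))"
  have eps0: "\<epsilon> > 0" using E0 K0 by (simp add: \<epsilon>_def)
  have qL: "0 < q ^ L" "q ^ L \<le> 1" using assms by (auto simp: power_le_one)
  have "(\<lambda>M. (1 - q ^ L) ^ M) \<longlonglongrightarrow> 0" using qL by (intro LIMSEQ_power_zero) auto
  from order_tendstoD(2)[OF this eps0] obtain M where M: "(1 - q ^ L) ^ M < \<epsilon>"
    by (auto simp: eventually_sequentially)
  have "((\<lambda>r::real. \<Sum>k<M. r ^ k / exp r / fact k) \<longlongrightarrow> (\<Sum>k<M. 0 / fact k)) at_top"
    by (intro tendsto_sum tendsto_divide tendsto_power_div_exp_0 tendsto_const) auto
  then have "((\<lambda>r::real. \<Sum>k<M. r ^ k / exp r / fact k) \<longlongrightarrow> 0) at_top" by simp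
  from order_tendstoD(2)[OF this eps0] obtain R where R: "\<And>r. r \<ge> R \<Longrightarrow> (\<Sum>k<M. r ^ k / exp r / fact k) < \<epsilon>"
    by (auto simp: eventually_at_top_linorder)
  define \<rho>0 where "\<rho>0 = max 1 R"
  define \<rho> where "\<rho> = dens \<rho>0 k2"
  have r1: "\<rho> \<ge> \<rho>0" unfolding \<rho>_def by (rule dens_ge) (simp add: \<rho>0_def)
  then have rpos: "\<rho> \<ge> 0" "\<rho> \<ge> R" by (auto simp: \<rho>0_def)
  have "(\<Sum>k<M. pmf (poisson_pmf \<rho>) k) = (\<Sum>k<M. \<rho> ^ k / exp \<rho> / fact k)"
  proof (intro sum.cong refl)
    have rp: "0 < \<rho>" using r1 by (simp add: \<rho>0_def)
    fix k show "pmf (poisson_pmf \<rho>) k = \<rho> ^ k / exp \<rho> / fact k"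
      by (simp add: pmf_poisson[OF rp] exp_minus field_simps)
  qed
  then have P: "(\<Sum>k<M. pmf (poisson_pmf \<rho>) k) < \<epsilon>" using R[OF rpos(2)] by simp
  have "pk q pc pb v \<rho>0 k2 = measure (Prho q \<rho>) (Abad pc pb (2*pb-1) v k2)"
    by (simp add: pk_def \<rho>_def)
  also have "\<dots> \<le> (real L + 1) * \<theta> ^ L + K * ((\<Sum>k<M. pmf (poisson_pmf \<rho>) k) + (1 - q^L)^M)"
    unfolding \<theta>_def K_def S_def
    by (rule main_bound[OF q pb L_def a_def vv t])
  also have "\<dots> < E / 2 + E / 2"
  proof -
    have "K * ((\<Sum>k<M. pmf (poisson_pmf \<rho>) k) + (1 - q^L)^M) \<le> K * (2 * \<epsilon>)"
      using P M K0 by (intro mult_left_mono) auto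
    also have "\<dots> < E / 2" using K0 E0 by (simp add: \<epsilon>_def field_simps)
    finally show ?thesis using part1 by linarith
  qed
  finally have "pk q pc pb v \<rho>0 k2 < exp (- (ln (real (Lsc k2)) powr (3/2)))" by (simp add: E_def L_def)
  moreover have "k2 \<ge> k'" "\<rho>0 \<ge> 1" by (auto simp: k2_def \<rho>0_def)
  ultimately show "\<exists>k2 \<ge> k'. \<exists>\<rho>0 \<ge> 1. pk q pc pb v \<rho>0 k2 < exp (- (ln (real (Lsc k2)) powr (3/2)))" by blast
qed


end
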